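(* Let $\mu$ be a Borel probability measure on $\mathbb{R}^d$. Suppose there exists a Borel set $E\subseteq\mathbb{R}^d$ with $\mu(E)>0$ and $\mu(E+k)=0$ for all $k\in\mathbb{Z}^d\setminus\{\mathbf{0}\}$. Then $\mathcal{Z}(\mu)=\emptyset$.
   Context: $\widehat{\mu}(\xi)=\int e^{-2\pi i\xi\cdot x}d\mu(x)$ and $\mathcal{Z}(\mu)=\{\xi\in\mathbb{R}^d:\widehat{\mu}(\xi+k)=0\text{ for all }k\in\mathbb{Z}^d\}$. *)

theory Defs
  imports "HOL-Probability.Probability"
begin

text \<open>Points of R^d are modelled as real ^ 'd (d = CARD('d)).
  The integer lattice Z^d: vectors with all coordinates integers.\<close>
definition int_lattice :: "(real ^ 'd) set" where
  "int_lattice = {k. \<forall>i. k $ i \<in> \<int>}"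

definition fourier_meas :: "(real ^ 'd) measure \<Rightarrow> real ^ 'd \<Rightarrow> complex" where
  "fourier_meas \<mu> \<xi> = (CLINT x | \<mu>. cis (- 2 * pi * (\<xi> \<bullet> x)))"

definition fourier_zero_set :: "(real ^ 'd) measure \<Rightarrow> (real ^ 'd) set" where
  "fourier_zero_set \<mu> = {\<xi>. \<forall>k\<in>int_lattice. fourier_meas \<mu> (\<xi> + k) = 0}"

end

theory Submission
  imports Defs
begin


definition Phi :: "real^'d \<Rightarrow> (real^'d) \<times> (real^'d)" where
  "Phi x = ((\<chi> i. cos (2*pi*x$i)), (\<chi> i. sin (2*pi*x$i)))"

definition fch :: "real^'d \<Rightarrow> real^'d \<Rightarrow> complex" where
  "fch \<xi> x = cis (- 2 * pi * (\<xi> \<bullet> x))"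

inductive trig :: "(real^'d \<Rightarrow> complex) \<Rightarrow> bool" where
  char: "k \<in> int_lattice \<Longrightarrow> trig (\<lambda>x. cis (2*pi*(k \<bullet> x)))"
| scale: "trig p \<Longrightarrow> trig (\<lambda>x. c * p x)"
| add: "trig p \<Longrightarrow> trig q \<Longrightarrow> trig (\<lambda>x. p x + q x)"

lemma int_lattice_add: "k \<in> int_lattice \<Longrightarrow> l \<in> int_lattice \<Longrightarrow> k + l \<in> int_lattice"
  by (auto simp: int_lattice_def)
lemma int_lattice_uminus: "k \<in> int_lattice \<Longrightarrow> - k \<in> int_lattice"
  by (auto simp: int_lattice_def)
lemma int_lattice_zero: "0 \<in> int_lattice"
  by (auto simp: int_lattice_def)
lemma int_lattice_axis: "axis i 1 \<in> int_lattice"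
  by (auto simp: int_lattice_def axis_def)

lemma trig_const: "trig (\<lambda>x. c)"
  using trig.scale[OF trig.char[OF int_lattice_zero], of c] by simp

lemma trig_char_mult:
  "trig q \<Longrightarrow> k \<in> int_lattice \<Longrightarrow> trig (\<lambda>x. cis (2*pi*(k \<bullet> x)) * q x)"
proof (induction q rule: trig.induct)
  case (char l)
  have "(\<lambda>x. cis (2*pi*(k \<bullet> x)) * cis (2*pi*(l \<bullet> x))) = (\<lambda>x. cis (2*pi*((k+l) \<bullet> x)))"
    by (simp add: cis_mult inner_add_left distrib_left)
  then show ?case using trig.char[OF int_lattice_add[OF char.prems char.hyps]] by simp
next
  case (scale p c)
  then show ?case using trig.scale[OF scale.IH[OF scale.prems], of c] by (simp add: mult.left_commute)
next
  case (add p q) then show ?case using trig.add[OF add.IH] by (simp add: distrib_left)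
qed

lemma trig_mult: "trig p \<Longrightarrow> trig q \<Longrightarrow> trig (\<lambda>x. p x * q x)"
proof (induction p rule: trig.induct)
  case (char k) then show ?case using trig_char_mult by blast
next
  case (scale p c) then show ?case using trig.scale[OF scale.IH[OF scale.prems], of c]
    by (simp add: mult.assoc)
next
  case (add p1 p2) then show ?case using trig.add[OF add.IH] by (simp add: distrib_right)
qed

lemma trig_sum: "finite A \<Longrightarrow> (\<And>a. a \<in> A \<Longrightarrow> trig (g a)) \<Longrightarrow> trig (\<lambda>x. \<Sum>a\<in>A. g a x)"
proof (induction A rule: finite_induct)
  case empty then show ?case using trig_const[of 0] by simp
next
  case (insert a A) then show ?case using trig.add[of "g a" "\<lambda>x. \<Sum>a\<in>A. g a x"] by simp
qed

lemma cis_cos: "complex_of_real (cos t) = (1/2) * cis t + (1/2) * cis (- t)"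
  by (simp add: complex_eq_iff)
lemma cis_sin: "complex_of_real (sin t) = (- \<i>/2) * cis t + (\<i>/2) * cis (- t)"
  by (simp add: complex_eq_iff)

lemma trig_cos: "trig (\<lambda>x. complex_of_real (cos (2*pi*x$i)))"
proof -
  have "(\<lambda>x. complex_of_real (cos (2*pi*x$i))) =
     (\<lambda>x. (1/2) * cis (2*pi*(axis i 1 \<bullet> x)) + (1/2) * cis (2*pi*((- axis i 1) \<bullet> x)))"
    by (simp add: cis_cos inner_axis')
  then show ?thesis
    by (simp only:) (intro trig.add trig.scale trig.char int_lattice_axis int_lattice_uminus)
qed

lemma trig_sin: "trig (\<lambda>x. complex_of_real (sin (2*pi*x$i)))"
proof -
  have "(\<lambda>x. complex_of_real (sin (2*pi*x$i))) =
     (\<lambda>x. (- \<i>/2) * cis (2*pi*(axis i 1 \<bullet> x)) + (\<i>/2) * cis (2*pi*((- axis i 1) \<bullet> x)))"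
    by (simp add: cis_sin inner_axis')
  then show ?thesis
    by (simp only:) (intro trig.add trig.scale trig.char int_lattice_axis int_lattice_uminus)
qed

lemma trig_Phi_basis:
  assumes "b \<in> Basis"
  shows "trig (\<lambda>x. complex_of_real (Phi x \<bullet> b))"
proof -
  from assms consider u where "u \<in> Basis" "b = (u, 0)" | u where "u \<in> Basis" "b = (0, u)"
    unfolding Basis_prod_def by auto
  then show ?thesis
  proof cases
    case 1
    then obtain i where "u = axis i 1" unfolding Basis_vec_def by auto
    then show ?thesis using 1 trig_cos[of i] by (simp add: Phi_def inner_axis)
  next
    case 2
    then obtain i where "u = axis i 1" unfolding Basis_vec_def by auto
    then show ?thesis using 2 trig_sin[of i] by (simp add: Phi_def inner_axis)
  qed
qed

lemma trig_linear:
  fixes l :: "(real^'d) \<times> (real^'d) \<Rightarrow> real"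
  assumes "bounded_linear l"
  shows "trig (\<lambda>x. complex_of_real (l (Phi x)))"
proof -
  interpret l: bounded_linear l by fact
  have ly: "l y = (\<Sum>b\<in>Basis. (y \<bullet> b) * l b)" for y
  proof -
    have "l y = l (\<Sum>b\<in>Basis. (y \<bullet> b) *\<^sub>R b)" by (simp add: euclidean_representation)
    also have "\<dots> = (\<Sum>b\<in>Basis. (y \<bullet> b) * l b)" by (simp add: l.sum l.scale)
    finally show ?thesis .
  qed
  have "(\<lambda>x. complex_of_real (l (Phi x))) =
      (\<lambda>x. \<Sum>b\<in>Basis. complex_of_real (l b) * complex_of_real (Phi x \<bullet> b))"
  proof
    fix x show "complex_of_real (l (Phi x)) =
      (\<Sum>b\<in>Basis. complex_of_real (l b) * complex_of_real (Phi x \<bullet> b))"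
      by (subst ly) (simp add: mult.commute)
  qed
  then show ?thesis
    by (auto intro!: trig_sum trig.scale trig_Phi_basis)
qed

lemma trig_rpoly: "real_polynomial_function r \<Longrightarrow> trig (\<lambda>x. complex_of_real (r (Phi x)))"
proof (induction r rule: real_polynomial_function.induct)
  case (linear f) then show ?case by (rule trig_linear)
next
  case (const c) then show ?case by (rule trig_const)
next
  case (add f g) then show ?case using trig.add by fastforce
next
  case (mult f g) then show ?case using trig_mult by fastforce
qed

lemma trig_poly:
  fixes p :: "(real^'d) \<times> (real^'d) \<Rightarrow> complex"
  assumes "polynomial_function p"
  shows "trig (\<lambda>x. p (Phi x))"
proof -
  have "real_polynomial_function (Re \<circ> p)" "real_polynomial_function (Im \<circ> p)"
    using assms bounded_linear_Re bounded_linear_Im unfolding polynomial_function_def by auto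
  then have "trig (\<lambda>x. complex_of_real (Re (p (Phi x))))" "trig (\<lambda>x. complex_of_real (Im (p (Phi x))))"
    using trig_rpoly by (fastforce simp: o_def)+
  then have "trig (\<lambda>x. complex_of_real (Re (p (Phi x))) + \<i> * complex_of_real (Im (p (Phi x))))"
    by (intro trig.add trig.scale)
  moreover have "(\<lambda>x. complex_of_real (Re (p (Phi x))) + \<i> * complex_of_real (Im (p (Phi x)))) = (\<lambda>x. p (Phi x))"
    by (simp add: fun_eq_iff complex_eq_iff)
  ultimately show ?thesis by simp
qed



lemma continuous_Phi: "continuous_on UNIV Phi"
  unfolding Phi_def by (intro continuous_intros)

lemma norm_fch[simp]: "norm (fch \<xi> x) = 1"
  by (simp add: fch_def)

lemma continuous_fch: "continuous_on UNIV (fch \<xi>)"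
  unfolding fch_def by (intro continuous_intros)

context
  fixes \<mu> :: "(real ^ 'd) measure" and \<xi> :: "real^'d"
  assumes P: "prob_space \<mu>"
    and S: "sets \<mu> = sets borel"
    and Z: "\<forall>k\<in>int_lattice. fourier_meas \<mu> (\<xi> + k) = 0"
begin

lemma meas_eq: "borel_measurable \<mu> = borel_measurable borel"
  by (rule measurable_cong_sets[OF S refl])

lemma space_eq: "space \<mu> = UNIV"
  using sets_eq_imp_space_eq[OF S] by simp

lemma meas_cont: "continuous_on UNIV h \<Longrightarrow> h \<in> borel_measurable \<mu>"
  using borel_measurable_continuous_onI meas_eq by blast

lemma integrable_bdd:
  fixes h :: "real^'d \<Rightarrow> 'b::{banach,second_countable_topology}"
  assumes "h \<in> borel_measurable \<mu>" "\<And>x. norm (h x) \<le> B"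
  shows "integrable \<mu> h"
proof -
  interpret prob_space \<mu> by (rule P)
  show ?thesis using assms by (intro integrable_const_bound[where B=B]) auto
qed

lemma trig_int:
  "trig p \<Longrightarrow> integrable \<mu> (\<lambda>x. fch \<xi> x * p x) \<and> (\<integral>x. fch \<xi> x * p x \<partial>\<mu>) = 0"
proof (induction p rule: trig.induct)
  case (char k)
  have eq: "(\<lambda>x. fch \<xi> x * cis (2*pi*(k \<bullet> x))) = (\<lambda>x. cis (- 2 * pi * ((\<xi> + (- k)) \<bullet> x)))"
    by (simp add: fch_def cis_mult inner_diff_left algebra_simps)
  have "integrable \<mu> (\<lambda>x. cis (- 2 * pi * ((\<xi> + (- k)) \<bullet> x)))"
    by (rule integrable_bdd[where B=1]) (auto intro!: meas_cont continuous_intros)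
  moreover have "(\<integral>x. cis (- 2 * pi * ((\<xi> + (- k)) \<bullet> x)) \<partial>\<mu>) = 0"
    using Z int_lattice_uminus[OF char] unfolding fourier_meas_def by blast
  ultimately show ?case unfolding eq by simp
next
  case (scale p c)
  have eq: "(\<lambda>x. fch \<xi> x * (c * p x)) = (\<lambda>x. c * (fch \<xi> x * p x))"
    by (simp add: algebra_simps)
  show ?case unfolding eq using scale.IH by simp
next
  case (add p q)
  have eq: "(\<lambda>x. fch \<xi> x * (p x + q x)) = (\<lambda>x. fch \<xi> x * p x + fch \<xi> x * q x)"
    by (simp add: algebra_simps)
  show ?case unfolding eq using add.IH by simp
qed

lemma cont_int:
  fixes G :: "(real^'d) \<times> (real^'d) \<Rightarrow> real"
  assumes G: "continuous_on UNIV G"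
  shows "(\<integral>x. fch \<xi> x * complex_of_real (G (Phi x)) \<partial>\<mu>) = 0"
proof -
  interpret prob_space \<mu> by (rule P)
  define Sb where "Sb = cbox ((-1::real^'d), (-1::real^'d)) (1, 1)"
  have cS: "compact Sb" unfolding Sb_def by (rule compact_cbox)
  have PhiS: "Phi x \<in> Sb" for x
    unfolding Sb_def cbox_Pair_eq Phi_def by (auto simp: mem_box_cart)
  have contGc: "continuous_on UNIV (\<lambda>y. complex_of_real (G y))" using G by (intro continuous_intros)
  have cGP: "continuous_on UNIV (\<lambda>x. G (Phi x))"
    by (metis continuous_on_compose2 continuous_Phi G subset_UNIV)
  have bound: "norm (\<integral>x. fch \<xi> x * complex_of_real (G (Phi x)) \<partial>\<mu>) \<le> 0 + e" if e: "e > 0" for e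
  proof -
    obtain p where p: "polynomial_function p" "\<forall>y\<in>Sb. norm (complex_of_real (G y) - p y) < e"
      using Stone_Weierstrass_polynomial_function[OF cS continuous_on_subset[OF contGc subset_UNIV] e]
      by blast
    have "continuous_on UNIV p"
      using continuous_polymonial_function[OF p(1)] continuous_at_imp_continuous_on by blast
    then have cp: "continuous_on UNIV (\<lambda>x. p (Phi x))"
      by (metis continuous_on_compose2 continuous_Phi subset_UNIV)
    from trig_int[OF trig_poly[OF p(1)]]
    have ip: "integrable \<mu> (\<lambda>x. fch \<xi> x * p (Phi x))" "(\<integral>x. fch \<xi> x * p (Phi x) \<partial>\<mu>) = 0"
      by auto
    define h where "h x = fch \<xi> x * (complex_of_real (G (Phi x)) - p (Phi x))" for x
    have hm: "h \<in> borel_measurable \<mu>"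
      unfolding h_def by (intro meas_cont continuous_intros continuous_fch cp cGP)
    have hb: "norm (h x) \<le> e" for x
      using p(2) PhiS[of x] by (auto simp: h_def norm_mult intro: less_imp_le)
    have ih: "integrable \<mu> h" by (rule integrable_bdd[OF hm hb])
    have eq: "(\<lambda>x. fch \<xi> x * complex_of_real (G (Phi x))) = (\<lambda>x. h x + fch \<xi> x * p (Phi x))"
      by (simp add: h_def fun_eq_iff algebra_simps)
    have "(\<integral>x. fch \<xi> x * complex_of_real (G (Phi x)) \<partial>\<mu>) = (\<integral>x. h x \<partial>\<mu>)"
      unfolding eq using ih ip by simp
    also have "norm \<dots> \<le> (\<integral>x. norm (h x) \<partial>\<mu>)"
      by (rule integral_norm_bound)
    also have "\<dots> \<le> (\<integral>x. e \<partial>\<mu>)"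
      by (rule integral_mono) (use ih hb in auto)
    also have "\<dots> = e" by (simp add: prob_space)
    finally show ?thesis by simp
  qed
  have "norm (\<integral>x. fch \<xi> x * complex_of_real (G (Phi x)) \<partial>\<mu>) \<le> 0"
    by (rule field_le_epsilon) (rule bound)
  then show ?thesis by simp
qed

lemma closed_int:
  assumes C: "closed C" "C \<noteq> {}"
  shows "(\<integral>x. fch \<xi> x * indicator C (Phi x) \<partial>\<mu>) = 0"
proof -
  interpret prob_space \<mu> by (rule P)
  define G where "G n y = max 0 (1 - real (Suc n) * infdist y C)" for n y
  have cG: "continuous_on UNIV (G n)" for n unfolding G_def by (intro continuous_intros)
  have cGP: "continuous_on UNIV (\<lambda>x. G n (Phi x))" for n
    by (metis continuous_on_compose2 continuous_Phi cG subset_UNIV)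
  have lim: "(\<lambda>n. G n y) \<longlonglongrightarrow> indicator C y" for y
  proof (cases "y \<in> C")
    case True then have "infdist y C = 0" using in_closed_iff_infdist_zero C by blast
    then show ?thesis using True by (simp add: G_def)
  next
    case False
    then have d: "infdist y C > 0"
      using in_closed_iff_infdist_zero[OF C, of y] infdist_nonneg[of y C] by (auto simp: less_le)
    obtain N :: nat where N: "1 / infdist y C < N" using reals_Archimedean2 by blast
    have "G n y = 0" if "n \<ge> N" for n
    proof -
      have "1 < real N * infdist y C" using N d by (simp add: field_simps)
      also have "\<dots> \<le> real (Suc n) * infdist y C" using that d by (intro mult_right_mono) auto
      finally show ?thesis by (simp add: G_def)
    qed
    then have "eventually (\<lambda>n. G n y = 0) sequentially" by (auto simp: eventually_sequentially)
    then have "(\<lambda>n. G n y) \<longlonglongrightarrow> 0" by (rule tendsto_eventually)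
    then show ?thesis using False by simp
  qed
  have limc: "(\<lambda>n. fch \<xi> x * complex_of_real (G n (Phi x))) \<longlonglongrightarrow> fch \<xi> x * indicator C (Phi x)" for x
  proof -
    have "(\<lambda>n. fch \<xi> x * complex_of_real (G n (Phi x))) \<longlonglongrightarrow> fch \<xi> x * complex_of_real (indicator C (Phi x))"
      by (intro tendsto_mult tendsto_const tendsto_of_real lim)
    moreover have "complex_of_real (indicator C (Phi x)) = indicator C (Phi x)"
      by (simp split: split_indicator)
    ultimately show ?thesis by simp
  qed
  have mind: "(\<lambda>x. indicator C (Phi x) :: complex) \<in> borel_measurable borel"
    by (rule measurable_compose[OF borel_measurable_continuous_onI[OF continuous_Phi]])
       (rule borel_measurable_indicator, simp add: borel_closed C)
  have "(\<lambda>n. \<integral>x. fch \<xi> x * complex_of_real (G n (Phi x)) \<partial>\<mu>) \<longlonglongrightarrow> (\<integral>x. fch \<xi> x * indicator C (Phi x) \<partial>\<mu>)"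
  proof (rule integral_dominated_convergence[where w="\<lambda>x. 1"])
    show "(\<lambda>x. fch \<xi> x * indicator C (Phi x)) \<in> borel_measurable \<mu>"
      unfolding meas_eq
      by (intro borel_measurable_times mind borel_measurable_continuous_onI continuous_fch)
    show "\<And>i. (\<lambda>x. fch \<xi> x * complex_of_real (G i (Phi x))) \<in> borel_measurable \<mu>"
      by (intro meas_cont continuous_intros continuous_fch cGP)
    show "integrable \<mu> (\<lambda>x. 1::real)" by simp
    show "AE x in \<mu>. (\<lambda>i. fch \<xi> x * complex_of_real (G i (Phi x))) \<longlonglongrightarrow> fch \<xi> x * indicator C (Phi x)"
      using limc by simp
    show "\<And>i. AE x in \<mu>. norm (fch \<xi> x * complex_of_real (G i (Phi x))) \<le> 1"
      using infdist_nonneg by (auto simp: norm_mult G_def intro!: AE_I2 mult_nonneg_nonneg)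
  qed
  moreover have "(\<lambda>n. \<integral>x. fch \<xi> x * complex_of_real (G n (Phi x)) \<partial>\<mu>) = (\<lambda>n. 0)"
    using cont_int[OF cG] by simp
  ultimately show ?thesis using LIMSEQ_unique tendsto_const by metis
qed

end


lemma Phi_eq:
  assumes h: "Phi x = Phi z"
  shows "x - z \<in> int_lattice"
proof -
  have "(x - z) $ i \<in> \<int>" for i
  proof -
    have c: "cos (2*pi*x$i) = cos (2*pi*z$i)"
      using arg_cong[OF h, of "\<lambda>p. fst p $ i"] by (simp add: Phi_def)
    have s: "sin (2*pi*x$i) = sin (2*pi*z$i)"
      using arg_cong[OF h, of "\<lambda>p. snd p $ i"] by (simp add: Phi_def)
    have "cos (2*pi*x$i - 2*pi*z$i) = 1"
      unfolding cos_diff c s using sin_cos_squared_add[of "2*pi*z$i"]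
      by (simp add: power2_eq_square algebra_simps)
    then obtain n :: int where n: "2*pi*x$i - 2*pi*z$i = real_of_int n * 2 * pi"
      using cos_one_2pi_int by blast
    then have "(2*pi) * (x$i - z$i) = (2*pi) * n" by (simp add: algebra_simps)
    then have "x$i - z$i = n" by simp
    then show ?thesis by simp
  qed
  then show ?thesis by (simp add: int_lattice_def)
qed

lemma countable_int_lattice: "countable (int_lattice :: (real^'d) set)"
proof -
  have "int_lattice \<subseteq> range (\<lambda>v::'d \<Rightarrow> int. \<chi> i. real_of_int (v i))"
  proof
    fix k :: "real^'d" assume "k \<in> int_lattice"
    then have "\<forall>i. k$i = real_of_int \<lfloor>k$i\<rfloor>" by (auto simp: int_lattice_def elim!: Ints_cases)
    then have "k = (\<chi> i. real_of_int ((\<lambda>i. \<lfloor>k$i\<rfloor>) i))" by (simp add: vec_eq_iff)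
    then show "k \<in> range (\<lambda>v::'d \<Rightarrow> int. \<chi> i. real_of_int (v i))"
      by (intro image_eqI[where x="\<lambda>i. \<lfloor>k$i\<rfloor>"]) simp_all
  qed
  then show ?thesis by (rule countable_subset) simp
qed

lemma four_cover:
  fixes t :: real
  shows   "1/2 < cos t \<or> 1/2 < - cos t \<or> 1/2 < sin t \<or> 1/2 < - sin t"
proof (rule ccontr)
  assume "\<not> ?thesis"
  then have "\<bar>cos t\<bar> \<le> \<bar>1/2\<bar>" "\<bar>sin t\<bar> \<le> \<bar>1/2\<bar>" by auto
  then have "(cos t)\<^sup>2 \<le> (1/2)\<^sup>2" "(sin t)\<^sup>2 \<le> (1/2)\<^sup>2" by (simp_all only: abs_le_square_iff)
  moreover have "(1/2::real)^2 = 1/4" by (simp add: power2_eq_square)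
  ultimately show False using sin_cos_squared_add[of t] by linarith
qed

lemma translate_eq: "(\<lambda>x. x + k) ` E = (\<lambda>x. x - k) -` (E :: (real^'d) set)"
  by (auto simp: image_iff) (metis diff_add_cancel)

theorem theorem1p3:
  fixes \<mu> :: "(real ^ 'd) measure" and E :: "(real ^ 'd) set"
  assumes "prob_space \<mu>"
    and "sets \<mu> = sets borel"
    and "E \<in> sets borel"
    and "measure \<mu> E > 0"
    and "\<forall>k\<in>int_lattice. k \<noteq> 0 \<longrightarrow> measure \<mu> ((\<lambda>x. x + k) ` E) = 0"
  shows "fourier_zero_set \<mu> = {}"
proof (rule ccontr)
  note P = assms(1) and S = assms(2)
  assume "fourier_zero_set \<mu> \<noteq> {}"
  then obtain \<xi> where Z: "\<forall>k\<in>int_lattice. fourier_meas \<mu> (\<xi> + k) = 0"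
    unfolding fourier_zero_set_def by auto
  interpret prob_space \<mu> by (rule P)
  have sp: "space \<mu> = UNIV" by (rule space_eq[OF P S Z])
  have Em: "E \<in> sets \<mu>" using assms(3) S by simp
  define A where "A c = {x. 1/2 < Re (cnj c * fch \<xi> x)}" for c
  have Am: "A c \<in> sets \<mu>" for c
  proof -
    have m: "(\<lambda>x. Re (cnj c * fch \<xi> x)) \<in> borel_measurable \<mu>"
      by (intro meas_cont[OF P S Z] continuous_intros continuous_fch)
    have "(\<lambda>x. Re (cnj c * fch \<xi> x)) -` {1/2<..} \<inter> space \<mu> \<in> sets \<mu>"
      by (rule measurable_sets[OF m]) simp
    moreover have "(\<lambda>x. Re (cnj c * fch \<xi> x)) -` {1/2<..} \<inter> space \<mu> = A c"
      by (auto simp: A_def sp)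
    ultimately show ?thesis by simp
  qed
  have cover: "E \<subseteq> (E \<inter> A 1) \<union> (E \<inter> A (-1)) \<union> (E \<inter> A \<i>) \<union> (E \<inter> A (-\<i>))"
  proof
    fix x assume "x \<in> E"
    moreover have "x \<in> A 1 \<union> A (-1) \<union> A \<i> \<union> A (-\<i>)"
      using four_cover[of "- 2 * pi * (\<xi> \<bullet> x)"] by (auto simp: A_def fch_def)
    ultimately show "x \<in> (E \<inter> A 1) \<union> (E \<inter> A (-1)) \<union> (E \<inter> A \<i>) \<union> (E \<inter> A (-\<i>))" by blast
  qed
  have "measure \<mu> E \<le> measure \<mu> ((E \<inter> A 1) \<union> (E \<inter> A (-1)) \<union> (E \<inter> A \<i>) \<union> (E \<inter> A (-\<i>)))"
    by (rule finite_measure_mono[OF cover]) (use Em Am in auto)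
  also have "\<dots> \<le> measure \<mu> (E \<inter> A 1) + measure \<mu> (E \<inter> A (-1)) + measure \<mu> (E \<inter> A \<i>) + measure \<mu> (E \<inter> A (-\<i>))"
    using Em Am by (smt (verit) measure_Un_le sets.Int sets.Un)
  finally have sum: "measure \<mu> E \<le> measure \<mu> (E \<inter> A 1) + measure \<mu> (E \<inter> A (-1)) + measure \<mu> (E \<inter> A \<i>) + measure \<mu> (E \<inter> A (-\<i>))" .
  have "\<exists>c. 0 < measure \<mu> (E \<inter> A c)"
  proof (rule ccontr)
    assume "\<not> ?thesis"
    then have "\<And>c. measure \<mu> (E \<inter> A c) \<le> 0" by (simp add: not_less)
    then show False using sum assms(4)
      by (smt (verit))
  qed
  then obtain c where c: "0 < measure \<mu> (E \<inter> A c)" by blast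
  define E2 where "E2 = E \<inter> A c"
  have E2b: "E2 \<in> sets borel" using Em Am S unfolding E2_def by auto
  have "emeasure \<mu> E2 = (SUP K \<in> {K. K \<subseteq> E2 \<and> compact K}. emeasure \<mu> K)"
    by (rule inner_regular[OF S _ E2b]) simp
  moreover have "0 < emeasure \<mu> E2" using c unfolding E2_def by (simp add: emeasure_eq_measure)
  ultimately obtain K where K: "K \<subseteq> E2" "compact K" "0 < emeasure \<mu> K"
    by (metis (no_types, lifting) less_SUP_iff mem_Collect_eq)
  have Kpos: "0 < measure \<mu> K" using K(3) by (simp add: emeasure_eq_measure)
  have Kne: "K \<noteq> {}" using Kpos by auto
  have Km: "K \<in> sets \<mu>" using K(2) S by (simp add: borel_closed compact_imp_closed)
  define C where "C = Phi ` K"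
  have Cc: "closed C" unfolding C_def
    by (intro compact_imp_closed compact_continuous_image continuous_on_subset[OF continuous_Phi] K(2)) auto
  have Cne: "C \<noteq> {}" using Kne unfolding C_def by auto
  have ci: "(\<integral>x. fch \<xi> x * indicator C (Phi x) \<partial>\<mu>) = 0"
    by (rule closed_int[OF P S Z Cc Cne])
  define N where "N = (\<Union>k\<in>int_lattice - {0}. (\<lambda>x. x + k) ` E)"
  have Nnull: "N \<in> null_sets \<mu>"
    unfolding N_def
  proof (rule null_sets_UN')
    show "countable (int_lattice - {0} :: (real^'d) set)"
      using countable_int_lattice by (rule countable_subset[rotated]) auto
  next
    fix k :: "real^'d" assume k: "k \<in> int_lattice - {0}"
    have mt: "(\<lambda>x. x - k) \<in> borel_measurable borel"
      by (intro borel_measurable_continuous_onI continuous_intros)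
    have "(\<lambda>x. x - k) -` E \<inter> space borel \<in> sets borel"
      by (rule measurable_sets[OF mt assms(3)])
    then have tm: "(\<lambda>x. x + k) ` E \<in> sets \<mu>" using S by (simp add: translate_eq)
    have "measure \<mu> ((\<lambda>x. x + k) ` E) = 0" using assms(5) k by auto
    then have "emeasure \<mu> ((\<lambda>x. x + k) ` E) = 0" by (simp add: emeasure_eq_measure)
    then show "(\<lambda>x. x + k) ` E \<in> null_sets \<mu>" using tm by auto
  qed
  have ae: "AE x in \<mu>. fch \<xi> x * indicator C (Phi x) = fch \<xi> x * (indicator K x :: complex)"
  proof (rule AE_I'[OF Nnull], rule subsetI)
    fix x assume "x \<in> {x \<in> space \<mu>. \<not> fch \<xi> x * indicator C (Phi x) = fch \<xi> x * (indicator K x :: complex)}"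
    then have ne: "indicator C (Phi x) \<noteq> (indicator K x :: complex)" by auto
    show "x \<in> N"
    proof (cases "x \<in> K")
      case True then have "Phi x \<in> C" unfolding C_def by auto
      then show ?thesis using ne True by simp
    next
      case False
      then have "Phi x \<in> C" using ne by (auto simp: indicator_def split: if_splits)
      then obtain z where z: "z \<in> K" "Phi x = Phi z" unfolding C_def by auto
      have k: "x - z \<in> int_lattice" by (rule Phi_eq[OF z(2)])
      have "x - z \<noteq> 0" using False z(1) by auto
      moreover have "x = z + (x - z)" by simp
      moreover have "z \<in> E" using z(1) K(1) unfolding E2_def by auto
      ultimately show ?thesis unfolding N_def using k by blast
    qed
  qed
  have mK: "(\<lambda>x. fch \<xi> x * (indicator K x :: complex)) \<in> borel_measurable \<mu>"
    using Km by (intro borel_measurable_times borel_measurable_indicator meas_cont[OF P S Z] continuous_fch)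
  have mC: "(\<lambda>x. fch \<xi> x * indicator C (Phi x)) \<in> borel_measurable \<mu>"
  proof -
    have mi: "(\<lambda>x. indicator C (Phi x) :: complex) \<in> borel_measurable borel"
      by (rule measurable_compose[OF borel_measurable_continuous_onI[OF continuous_Phi]])
         (rule borel_measurable_indicator, simp add: borel_closed Cc)
    show ?thesis
      unfolding meas_eq[OF P S Z]
      by (intro borel_measurable_times mi borel_measurable_continuous_onI continuous_fch)
  qed
  have iK0: "(\<integral>x. fch \<xi> x * (indicator K x :: complex) \<partial>\<mu>) = 0"
    using integral_cong_AE[OF mC mK ae] ci by simp
  have intK: "integrable \<mu> (\<lambda>x. cnj c * (fch \<xi> x * (indicator K x :: complex)))"
    by (rule integrable_bdd[OF P S Z, where B="norm c"])
       (use mK in \<open>auto simp: norm_mult indicator_def\<close>)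
  define r where "r x = Re (cnj c * (fch \<xi> x * (indicator K x :: complex)))" for x
  have "(\<integral>x. r x \<partial>\<mu>) = Re (\<integral>x. cnj c * (fch \<xi> x * (indicator K x :: complex)) \<partial>\<mu>)"
    unfolding r_def by (rule integral_Re[OF intK])
  also have "\<dots> = Re (cnj c * (\<integral>x. fch \<xi> x * (indicator K x :: complex) \<partial>\<mu>))"
    by simp
  also have "\<dots> = 0" using iK0 by simp
  finally have r0: "(\<integral>x. r x \<partial>\<mu>) = 0" .
  have "(\<integral>x. (1/2) * indicator K x \<partial>\<mu>) \<le> (\<integral>x. r x \<partial>\<mu>)"
  proof (rule integral_mono)
    show "integrable \<mu> (\<lambda>x. (1/2) * indicator K x :: real)"
      using Km by (intro integrable_mult_right integrable_real_indicator) (auto simp: emeasure_eq_measure)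
    show "integrable \<mu> r" unfolding r_def using intK by (rule integrable_Re)
    fix x assume "x \<in> space \<mu>"
    show "(1/2) * indicator K x \<le> r x"
      using K(1) unfolding r_def E2_def A_def by (auto simp: indicator_def)
  qed
  moreover have "(\<integral>x. (1/2) * indicator K x \<partial>\<mu>) = (1/2) * measure \<mu> K"
    using Km sp by simp
  ultimately show False using r0 Kpos by simp
qed

end
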